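(* Let $T$ be a compact interval in $\mathbb R^k$ and let $p>0$ satisfy $\alpha p<k$. Then there exists a finite constant $C$ such that for all convex subsets $F\subset T$, all $n\ge1$ and all $y^1,\dots,y^n\in F$, $$\int_F\frac{dy}{\big(\sum_{\ell=1}^k\min_{1\le i\le n}|y_\ell-y^i_\ell|^2\big)^{\alpha p/2}}\le Cn^{\alpha p}[\lambda_k(F)]^{1-\frac{\alpha p}{k}}.$$
   Context: $\alpha\in(0,1)$ is a fixed constant (in the paper $\alpha=\frac{2H+1-N+\beta}{2}$ with $H\in[1/2,1)$ and $N-2H-1<\beta<N-2H+1$). For $y\in\mathbb R^k$, $y_\ell$ denotes its $\ell$-th coordinate; $\lambda_k$ is Lebesgue measure on $\mathbb R^k$. *)

theory Defs
  imports "HOL-Analysis.Analysis"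
begin

end

theory Submission
  imports Defs
begin


lemma cbox_meas:
  fixes c :: "real^'k" and r :: real
  assumes "0 \<le> r"
  shows "emeasure lebesgue (cbox (c - (\<chi> l. r)) (c + (\<chi> l. r))) = ennreal ((2*r) ^ CARD('k))"
proof -
  have B: "\<And>b. b \<in> (Basis::(real^'k) set) \<Longrightarrow> (c + (\<chi> l. r) - (c - (\<chi> l. r))) \<bullet> b = 2*r"
    by (auto simp: Basis_vec_def inner_axis' inner_axis)
  have B2: "\<And>b. b \<in> (Basis::(real^'k) set) \<Longrightarrow> (c - (\<chi> l. r)) \<bullet> b \<le> (c + (\<chi> l. r)) \<bullet> b"
    using assms by (auto simp: Basis_vec_def inner_axis' inner_axis)
  have "emeasure lebesgue (cbox (c - (\<chi> l. r)) (c + (\<chi> l. r))) = emeasure lborel (cbox (c - (\<chi> l. r)) (c + (\<chi> l. r)))"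
    by simp
  also have "\<dots> = ennreal (\<Prod>b\<in>(Basis::(real^'k) set). 2*r)"
    using B B2 by (simp add: emeasure_lborel_cbox_eq)
  also have "\<dots> = ennreal ((2*r) ^ CARD('k))"
    by simp
  finally show ?thesis .
qed

lemma find_J:
  fixes x :: real assumes "1 < x"
  obtains J :: nat where "2^J \<le> x" "x < 2^(J+1)"
proof -
  obtain m :: nat where m: "x < 2^m" using real_arch_pow[of 2 x] by auto
  define m0 where "m0 = (LEAST m::nat. x < 2^m)"
  have m0: "x < 2^m0" unfolding m0_def by (rule LeastI[of _ m]) (rule m)
  have "m0 \<noteq> 0" using m0 assms by (cases m0) auto
  then have e: "m0 = (m0 - 1) + 1" by simp
  have "\<not> x < 2^(m0-1)" unfolding m0_def by (rule not_less_Least) (use \<open>m0 \<noteq> 0\<close> in \<open>simp add: m0_def\<close>)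
  then show ?thesis using that[of "m0 - 1"] m0 e by (metis not_less)
qed


lemma a_eq:
  fixes r0 s :: real and j :: nat
  assumes "r0 > 0"
  shows "(r0 / 2^j / 2) powr (-s) = r0 powr (-s) * 2 powr s * (2 powr s)^j"
proof -
  have e: "(2::real)^j * 2 = 2 powr (real j + 1)"
    by (simp add: powr_add powr_realpow)
  have "(r0 / 2^j / 2) powr (-s) = r0 powr (-s) / (2^j*2) powr (-s)"
    using assms by (simp add: powr_divide)
  also have "\<dots> = r0 powr (-s) * ((2 powr (real j + 1)) powr s)"
    unfolding e by (simp add: powr_minus divide_inverse)
  also have "(2 powr (real j + 1)) powr s = 2 powr s * (2 powr s)^j"
  proof -
    have "((2::real) powr s)^j = 2 powr (real j * s)" by (rule powr_power) simp
    then show ?thesis unfolding powr_powr by (simp add: powr_add algebra_simps)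
  qed
  finally show ?thesis by simp
qed

lemma nr_eq:
  fixes V :: real and K :: nat and n :: nat
  assumes "V > 0" "K \<ge> 1" "n \<ge> 1"
  shows "real n ^ K * (2 * (V powr (1/K) / (2*n) / 2^j)) ^ K = V / (2^K)^j"
proof -
  have "real n ^ K * (2 * (V powr (1/K) / (2*n) / 2^j)) ^ K = (V powr (1/K))^K / (2^j)^K"
    using assms by (simp add: power_divide power_mult_distrib)
  also have "(V powr (1/K))^K = V" using assms
    unfolding powr_power[of V, OF less_imp_neq[OF assms(1), symmetric]] by simp
  finally show ?thesis by (simp add: power_mult[symmetric] mult.commute)
qed

lemma E_eq:
  fixes V s :: real and K n :: nat
  assumes "V > 0" "K \<ge> 1" "n \<ge> 1"
  shows "(V powr (1/K) / (2*n)) powr (-s) * V = 2 powr s * real n powr s * V powr (1 - s / real K)"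
proof -
  have "(V powr (1/K) / (2*n)) powr (-s) = (V powr (1/K)) powr (-s) / (2*n) powr (-s)"
    using assms by (simp add: powr_divide)
  also have "\<dots> = V powr (-s/K) * (2 powr s * real n powr s)"
    using assms by (simp add: powr_powr powr_minus divide_inverse powr_mult mult.commute)
  finally have "(V powr (1/K) / (2*n)) powr (-s) * V = V powr (-s/K) * V * (2 powr s * real n powr s)" by simp
  also have "V powr (-s/K) * V = V powr (1 - s/K)"
    using assms by (simp add: powr_diff powr_minus divide_inverse)
  finally show ?thesis by simp
qed

definition Cst :: "real \<Rightarrow> nat \<Rightarrow> real" where
  "Cst s K = 2 powr s * (1 + 2 powr s / (1 - 2 powr s / 2^K))"

lemma key:
  fixes s :: real and F :: "(real^'k) set" and ys :: "nat \<Rightarrow> real^'k" and n :: nat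
  assumes s: "0 < s" "s < real CARD('k)" and F: "F \<in> lmeasurable" and n: "1 \<le> n"
  shows "(\<integral>\<^sup>+ y \<in> F. ennreal ((\<Sum>l\<in>UNIV. Min ((\<lambda>i. \<bar>y $ l - ys i $ l\<bar> ^ 2) ` {1..n}))
                                 powr (- (s / 2))) \<partial>lebesgue)
        \<le> ennreal (Cst s CARD('k) * real n powr s * measure lebesgue F powr (1 - s / real CARD('k)))"
proof -
  define K where "K = CARD('k)"
  define V where "V = measure lebesgue F"
  define g where "g y = (\<Sum>l\<in>UNIV. Min ((\<lambda>i. \<bar>y $ l - ys i $ l\<bar> ^ 2) ` {1..n}))" for y :: "real^'k"
  have Fs: "F \<in> sets lebesgue" using F by (simp add: fmeasurableD)
  have emF: "emeasure lebesgue F = ennreal V" unfolding V_def using F by (simp add: emeasure_eq_measure2)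
  have V0: "V \<ge> 0" unfolding V_def by simp
  have K1: "K \<ge> 1" unfolding K_def by (simp add: Suc_le_eq)
  show ?thesis
  proof (cases "V = 0")
    case True
    then have "F \<in> null_sets lebesgue" using Fs emF by (simp add: null_sets_def)
    then have "(\<integral>\<^sup>+ y \<in> F. ennreal (g y powr (- (s / 2))) \<partial>lebesgue) = 0"
      by (rule nn_integral_null_set)
    then show ?thesis unfolding g_def by simp
  next
    case False
    then have Vp: "V > 0" using V0 by simp
    define r0 where "r0 = V powr (1/K) / (2*n)"
    have r0p: "r0 > 0" unfolding r0_def using Vp n by simp
    define r where "r j = r0 / 2^j" for j :: nat
    have rp: "r j > 0" for j unfolding r_def using r0p by simp
    define S where "S = (PiE (UNIV::'k set) (\<lambda>_. {1..n}))"
    define z where "z \<sigma> = (\<chi> l. ys (\<sigma> l) $ l)" for \<sigma> :: "'k \<Rightarrow> nat"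
    define U where "U j = (\<Union>\<sigma>\<in>S. cbox (z \<sigma> - (\<chi> l. r j)) (z \<sigma> + (\<chi> l. r j)))" for j
    define a where "a j = (r j / 2) powr (-s)" for j
    have Sfin: "finite S" unfolding S_def by (simp add: finite_PiE)
    have cardS: "card S = n ^ K" unfolding S_def K_def by (simp add: card_PiE)
    have U_meas: "U j \<in> sets lebesgue" for j
      unfolding U_def using Sfin by (intro sets.finite_UN) (auto intro: fmeasurableD)
    have U_em: "emeasure lebesgue (U j) \<le> ennreal (real n ^ K * (2 * r j) ^ K)" for j
    proof -
      have "emeasure lebesgue (U j) \<le> (\<Sum>\<sigma>\<in>S. emeasure lebesgue (cbox (z \<sigma> - (\<chi> l. r j)) (z \<sigma> + (\<chi> l. r j))))"
        unfolding U_def using Sfin by (intro emeasure_subadditive_finite) (auto intro: fmeasurableD)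
      also have "\<dots> = (\<Sum>\<sigma>\<in>S. ennreal ((2 * r j) ^ K))"
        unfolding K_def using rp by (intro sum.cong refl cbox_meas) (simp add: less_imp_le)
      also have "\<dots> = ennreal (real n ^ K * (2 * r j) ^ K)"
        using cardS by (simp add: ennreal_of_nat_eq_real_of_nat ennreal_mult')
      finally show ?thesis .
    qed
    have pw: "ennreal (g y powr (-(s/2))) * indicator F y \<le>
       ennreal (r0 powr (-s)) * indicator F y + (\<Sum>j. ennreal (a j) * indicator (U j) y)" for y
    proof (cases "y \<in> F")
      case False then show ?thesis by simp
    next
      case yF: True
      define G where "G = g y"
      have minnn: "0 \<le> Min ((\<lambda>i. \<bar>y $ l - ys i $ l\<bar> ^ 2) ` {1..n})" for l
        using n by (subst Min_ge_iff) auto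
      have G0: "G \<ge> 0" unfolding G_def g_def by (intro sum_nonneg minnn)
      define t where "t = sqrt G"
      have t0: "t \<ge> 0" unfolding t_def using G0 by simp
      have Gt: "G powr (-(s/2)) = t powr (-s)"
      proof -
        have "t = G powr (1/2)" unfolding t_def using G0 by (simp add: powr_half_sqrt)
        then show ?thesis by (simp add: powr_powr)
      qed
      show ?thesis
      proof (cases "t = 0")
        case True then show ?thesis using yF Gt G_def by simp
      next
        case False
        then have tp: "t > 0" using t0 by simp
        show ?thesis
        proof (cases "r0 \<le> t")
          case True
          have "t powr (-s) \<le> r0 powr (-s)" using True r0p s by (intro powr_mono2') auto
          then have "ennreal (g y powr (-(s/2))) * indicator F y \<le> ennreal (r0 powr (-s)) * indicator F y"
            using yF Gt G_def by (simp add: ennreal_leI)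
          then show ?thesis by (rule order_trans) simp
        next
          case False
          then have "1 < r0 / t" using tp by simp
          then obtain J :: nat where J1: "2^J \<le> r0 / t" and J2: "r0 / t < 2^(J+1)" by (rule find_J)
          have tJ1: "t \<le> r J" unfolding r_def using J1 tp by (simp add: field_simps)
          have tJ2: "r J / 2 < t" unfolding r_def using J2 tp by (simp add: field_simps)
          have "t powr (-s) \<le> (r J / 2) powr (-s)" using tJ2 rp[of J] s by (intro powr_mono2') auto
          then have le1: "ennreal (g y powr (-(s/2))) * indicator F y \<le> ennreal (a J)"
            using yF Gt G_def a_def by (simp add: ennreal_leI)
          have yU: "y \<in> U J"
          proof -
            have ex: "\<exists>i\<in>{1..n}. \<bar>y $ l - ys i $ l\<bar> \<le> r J" for l
            proof -
              have "Min ((\<lambda>i. \<bar>y $ l - ys i $ l\<bar> ^ 2) ` {1..n}) \<le> G"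
                unfolding G_def g_def by (rule member_le_sum) (use minnn in auto)
              also have "G = t^2" unfolding t_def using G0 by simp
              also have "t^2 \<le> (r J)^2" using tJ1 t0 by (intro power_mono) auto
              finally have m: "Min ((\<lambda>i. \<bar>y $ l - ys i $ l\<bar> ^ 2) ` {1..n}) \<le> (r J)^2" .
              have "Min ((\<lambda>i. \<bar>y $ l - ys i $ l\<bar> ^ 2) ` {1..n}) \<in> (\<lambda>i. \<bar>y $ l - ys i $ l\<bar> ^ 2) ` {1..n}"
                using n by (intro Min_in) auto
              then obtain i where i: "i \<in> {1..n}" "Min ((\<lambda>i. \<bar>y $ l - ys i $ l\<bar> ^ 2) ` {1..n}) = \<bar>y $ l - ys i $ l\<bar> ^ 2"
                by auto
              then have "\<bar>y $ l - ys i $ l\<bar> ^ 2 \<le> (r J)^2" using m by simp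
              then have "\<bar>y $ l - ys i $ l\<bar> \<le> r J" using rp[of J]
                by (simp add: power2_le_iff_abs_le less_imp_le)
              then show ?thesis using i by blast
            qed
            define \<sigma> where "\<sigma> l = (SOME i. i \<in> {1..n} \<and> \<bar>y $ l - ys i $ l\<bar> \<le> r J)" for l
            have \<sigma>: "\<sigma> l \<in> {1..n} \<and> \<bar>y $ l - ys (\<sigma> l) $ l\<bar> \<le> r J" for l
              unfolding \<sigma>_def using ex[of l] by (rule someI_ex[OF bexE]) blast+
            have \<sigma>': "ys (\<sigma> l) $ l - r J \<le> y $ l \<and> y $ l \<le> ys (\<sigma> l) $ l + r J" for l
              using \<sigma>[of l] by (auto simp: abs_le_iff)
            have "\<sigma> \<in> S" unfolding S_def PiE_UNIV_domain using \<sigma> by auto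
            moreover have "y \<in> cbox (z \<sigma> - (\<chi> l. r J)) (z \<sigma> + (\<chi> l. r J))"
              using \<sigma>' unfolding mem_box_cart z_def by simp
            ultimately show ?thesis unfolding U_def by blast
          qed
          have "ennreal (a J) = ennreal (a J) * indicator (U J) y" using yU by simp
          also have "\<dots> \<le> (\<Sum>j. ennreal (a j) * indicator (U j) y)"
          proof -
            have "sum (\<lambda>j. ennreal (a j) * indicator (U j) y) {J} \<le> (\<Sum>j. ennreal (a j) * indicator (U j) y)"
              by (rule sum_le_suminf) auto
            then show ?thesis by (simp only: sum.insert finite.emptyI empty_iff not_False_eq_True sum.empty add_0_right)
          qed
          finally have le2: "ennreal (a J) \<le> (\<Sum>j. ennreal (a j) * indicator (U j) y)" .
          show ?thesis by (rule order_trans[OF le1 add_increasing[OF zero_le le2]])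
        qed
      qed
    qed
    have meas1: "(\<lambda>y. ennreal (r0 powr (-s)) * indicator F y) \<in> borel_measurable lebesgue"
      using Fs by simp
    have meas2: "(\<lambda>y. ennreal (a j) * indicator (U j) y) \<in> borel_measurable lebesgue" for j
      using U_meas by simp
    have "(\<integral>\<^sup>+ y \<in> F. ennreal (g y powr (- (s / 2))) \<partial>lebesgue) \<le>
       (\<integral>\<^sup>+ y. ennreal (r0 powr (-s)) * indicator F y + (\<Sum>j. ennreal (a j) * indicator (U j) y) \<partial>lebesgue)"
      by (intro nn_integral_mono pw)
    also have "\<dots> = ennreal (r0 powr (-s)) * emeasure lebesgue F + (\<Sum>j. ennreal (a j) * emeasure lebesgue (U j))"
      using meas1 meas2 Fs U_meas
      by (simp add: nn_integral_add nn_integral_suminf borel_measurable_suminf nn_integral_cmult_indicator)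
    also have "\<dots> \<le> ennreal (r0 powr (-s) * V) + (\<Sum>j. ennreal (a j * (real n ^ K * (2 * r j) ^ K)))"
    proof (rule add_mono)
      show "ennreal (r0 powr (-s)) * emeasure lebesgue F \<le> ennreal (r0 powr (-s) * V)"
        using emF V0 by (simp add: ennreal_mult)
      show "(\<Sum>j. ennreal (a j) * emeasure lebesgue (U j)) \<le> (\<Sum>j. ennreal (a j * (real n ^ K * (2 * r j) ^ K)))"
      proof (rule suminf_le)
        fix j
        have "ennreal (a j) * emeasure lebesgue (U j) \<le> ennreal (a j) * ennreal (real n ^ K * (2 * r j) ^ K)"
          by (rule mult_left_mono[OF U_em]) simp
        also have "\<dots> = ennreal (a j * (real n ^ K * (2 * r j) ^ K))"
          unfolding a_def using rp[of j] by (simp add: ennreal_mult)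
        finally show "ennreal (a j) * emeasure lebesgue (U j) \<le> ennreal (a j * (real n ^ K * (2 * r j) ^ K))" .
      qed auto
    qed
    also have "\<dots> = ennreal (Cst s CARD('k) * real n powr s * V powr (1 - s / real CARD('k)))"
    proof -
      define q where "q = 2 powr s / 2^K"
      define E where "E = r0 powr (-s) * V"
      have termeq: "a j * (real n ^ K * (2 * r j) ^ K) = (2 powr s * E) * q ^ j" for j
      proof -
        have "a j = r0 powr (-s) * 2 powr s * (2 powr s)^j"
          unfolding a_def r_def using r0p by (rule a_eq)
        moreover have "real n ^ K * (2 * r j) ^ K = V / (2^K)^j"
          unfolding r_def r0_def using Vp K1 n by (rule nr_eq)
        ultimately show ?thesis unfolding q_def E_def by (simp add: power_divide)
      qed
      have q0: "0 \<le> q" unfolding q_def by simp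
      have "2 powr s < 2 powr (real K)" using s unfolding K_def by (intro powr_less_mono) auto
      then have q1: "q < 1" unfolding q_def by (simp add: powr_realpow)
      have E0: "E \<ge> 0" unfolding E_def using V0 by simp
      have summ: "summable (\<lambda>j. (2 powr s * E) * q ^ j)"
        using q0 q1 by (intro summable_mult) simp
      have "(\<Sum>j. ennreal (a j * (real n ^ K * (2 * r j) ^ K))) = (\<Sum>j. ennreal ((2 powr s * E) * q ^ j))"
        unfolding termeq ..
      also have "\<dots> = ennreal (\<Sum>j. (2 powr s * E) * q ^ j)"
        using summ q0 E0 by (intro suminf_ennreal2) auto
      also have "(\<Sum>j. (2 powr s * E) * q ^ j) = 2 powr s * E / (1 - q)"
        using q0 q1 by (simp add: suminf_mult suminf_geometric)
      finally have sum_eq: "(\<Sum>j. ennreal (a j * (real n ^ K * (2 * r j) ^ K))) = ennreal (2 powr s * E / (1 - q))" .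
      have Eeq: "E = 2 powr s * real n powr s * V powr (1 - s / real K)"
        unfolding E_def r0_def using Vp K1 n by (rule E_eq)
      have "ennreal (r0 powr (-s) * V) + ennreal (2 powr s * E / (1 - q)) = ennreal (E + 2 powr s * E / (1 - q))"
        unfolding E_def using E0 q1 by (subst ennreal_plus) (auto simp: E_def)
      also have "E + 2 powr s * E / (1 - q) = Cst s CARD('k) * real n powr s * V powr (1 - s / real CARD('k))"
        unfolding Eeq Cst_def q_def K_def by (simp add: algebra_simps)
      finally show ?thesis using sum_eq by simp
    qed
    finally show ?thesis unfolding g_def V_def .
  qed
qed

theorem lemma4p3:
  fixes \<alpha> p :: real and a b :: "real ^ 'k"
  assumes "0 < \<alpha>" "\<alpha> < 1"
    and "0 < p" "\<alpha> * p < real CARD('k)"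
  shows "\<exists>C::real. \<forall>F n (ys :: nat \<Rightarrow> real ^ 'k).
      F \<subseteq> cbox a b \<longrightarrow> convex F \<longrightarrow> 1 \<le> n \<longrightarrow> (\<forall>i\<in>{1..n}. ys i \<in> F) \<longrightarrow>
      (\<integral>\<^sup>+ y \<in> F. ennreal ((\<Sum>l\<in>UNIV. Min ((\<lambda>i. \<bar>y $ l - ys i $ l\<bar> ^ 2) ` {1..n}))
                                 powr (- (\<alpha> * p / 2))) \<partial>lebesgue)
        \<le> ennreal (C * real n powr (\<alpha> * p) * measure lebesgue F powr (1 - \<alpha> * p / real CARD('k)))"
proof (intro exI allI impI)
  fix F :: "(real^'k) set" and n :: nat and ys :: "nat \<Rightarrow> real^'k"
  assume F: "F \<subseteq> cbox a b" and cF: "convex F" and n: "1 \<le> n"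
  have "F \<in> lmeasurable"
    using cF bounded_subset[OF bounded_cbox F] by (rule measurable_convex)
  moreover have "0 < \<alpha> * p" using assms by simp
  ultimately show "(\<integral>\<^sup>+ y \<in> F. ennreal ((\<Sum>l\<in>UNIV. Min ((\<lambda>i. \<bar>y $ l - ys i $ l\<bar> ^ 2) ` {1..n}))
                                 powr (- (\<alpha> * p / 2))) \<partial>lebesgue)
        \<le> ennreal (Cst (\<alpha> * p) CARD('k) * real n powr (\<alpha> * p) * measure lebesgue F powr (1 - \<alpha> * p / real CARD('k)))"
    using key[of "\<alpha> * p" F n ys] assms(4) n by blast
qed

end
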